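(* Let $k$ be a field and $p>7$ an odd prime. Let $R^2_p$ be the $k$-algebra generated by $y_0,\dots,y_{p-1}$ (indices taken modulo $p$) with relations $y_i^2=0$ for $0\le i<p$, and $\sum_{i=0}^{p-1}y_iy_{i+k}=0$ for $1\le k\le p-1$. Then $R^2_p$ is infinite-dimensional. *)

theory Defs
  imports "HOL-Computational_Algebra.Primes"
begin

text \<open>Free (noncommutative) associative k-algebra on generators y_0,...,y_{p-1}:
  finitely supported functions from words (lists of generator indices < p) to k.\<close>

type_synonym 'k ncpoly = "nat list \<Rightarrow> 'k"

definition ncpoly_set :: "nat \<Rightarrow> ('k::field) ncpoly set" where
  "ncpoly_set p = {f. finite {w. f w \<noteq> 0} \<and> (\<forall>w. f w \<noteq> 0 \<longrightarrow> set w \<subseteq> {..<p})}"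

definition nc_add :: "('k::field) ncpoly \<Rightarrow> 'k ncpoly \<Rightarrow> 'k ncpoly" where
  "nc_add f g = (\<lambda>w. f w + g w)"

definition nc_smult :: "'k::field \<Rightarrow> 'k ncpoly \<Rightarrow> 'k ncpoly" where
  "nc_smult c f = (\<lambda>w. c * f w)"

definition nc_zero :: "('k::field) ncpoly" where
  "nc_zero = (\<lambda>w. 0)"

definition nc_mult :: "('k::field) ncpoly \<Rightarrow> 'k ncpoly \<Rightarrow> 'k ncpoly" where
  "nc_mult f g = (\<lambda>w. \<Sum>i\<in>{0..length w}. f (take i w) * g (drop i w))"

definition nc_var :: "nat \<Rightarrow> ('k::field) ncpoly" where
  "nc_var i = (\<lambda>w. if w = [i] then 1 else 0)"

inductive_set nc_ideal :: "nat \<Rightarrow> ('k::field) ncpoly set \<Rightarrow> 'k ncpoly set"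
  for p :: nat and rels :: "'k ncpoly set" where
  gen: "r \<in> rels \<Longrightarrow> r \<in> nc_ideal p rels"
| zero: "nc_zero \<in> nc_ideal p rels"
| add: "f \<in> nc_ideal p rels \<Longrightarrow> g \<in> nc_ideal p rels \<Longrightarrow> nc_add f g \<in> nc_ideal p rels"
| smult: "f \<in> nc_ideal p rels \<Longrightarrow> nc_smult c f \<in> nc_ideal p rels"
| lmult: "f \<in> nc_ideal p rels \<Longrightarrow> a \<in> ncpoly_set p \<Longrightarrow> nc_mult a f \<in> nc_ideal p rels"
| rmult: "f \<in> nc_ideal p rels \<Longrightarrow> a \<in> ncpoly_set p \<Longrightarrow> nc_mult f a \<in> nc_ideal p rels"

definition quotient_fin_dim :: "nat \<Rightarrow> ('k::field) ncpoly set \<Rightarrow> bool" where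
  "quotient_fin_dim p rels \<longleftrightarrow>
     (\<exists>S. finite S \<and> S \<subseteq> ncpoly_set p \<and>
        (\<forall>f\<in>ncpoly_set p. \<exists>c :: 'k ncpoly \<Rightarrow> 'k.
            (\<lambda>w. f w - (\<Sum>s\<in>S. c s * s w)) \<in> nc_ideal p rels))"

definition R2_rels :: "nat \<Rightarrow> ('k::field) ncpoly set" where
  "R2_rels p =
     {nc_mult (nc_var i) (nc_var i) | i. i < p} \<union>
     {(\<lambda>w. \<Sum>i<p. nc_mult (nc_var i) (nc_var ((i + j) mod p)) w) | j. 1 \<le> j \<and> j \<le> p - 1}"

end

theory Submission
  imports Defs "HOL-Library.Function_Algebras" HOL.Vector_Spaces
begin


definition sc :: "'k::field \<Rightarrow> ('k ncpoly) \<Rightarrow> 'k ncpoly" where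
  "sc c f = (\<lambda>w. c * f w)"

interpretation V: vector_space "sc :: 'k::field \<Rightarrow> 'k ncpoly \<Rightarrow> 'k ncpoly"
  by unfold_locales (auto simp: sc_def fun_eq_iff algebra_simps)

lemma sc_apply: "sc c f w = c * f w" by (simp add: sc_def)

lemma sum_fun_apply: "(\<Sum>x\<in>A. (f x :: 'a \<Rightarrow> 'b::comm_monoid_add)) w = (\<Sum>x\<in>A. f x w)"
  by (induction A rule: infinite_finite_induct) auto

definition additive_hom :: "('k::field ncpoly \<Rightarrow> 'k ncpoly) \<Rightarrow> bool" where
  "additive_hom f \<longleftrightarrow> (\<forall>x y. f (x + y) = f x + f y) \<and> (\<forall>c x. f (sc c x) = sc c (f x))"

lemma lin_span_image:
  assumes "additive_hom f" and "x \<in> V.span S"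
  shows "f x \<in> V.span (f ` S)"
  using assms(2)
proof (induction rule: V.span_induct_alt)
  case base
  have "f (sc 0 0) = sc 0 (f 0)" using assms(1) unfolding additive_hom_def by blast
  then have "f 0 = 0" by simp
  then show ?case using V.span_zero by metis
next
  case (step c x y)
  have "f (sc c x + y) = sc c (f x) + f y" using assms(1) by (simp add: additive_hom_def)
  then show ?case using step V.span_add V.span_scale V.span_base imageI by metis
qed

lemma lin_span_image_subset:
  assumes "additive_hom f" shows "f ` V.span S \<subseteq> V.span (f ` S)"
  using lin_span_image[OF assms] by blast

lemma dim_mono_fin:
  fixes A W :: "'k::field ncpoly set"
  assumes "A \<subseteq> V.span W" "finite W"
  shows "V.dim A \<le> V.dim W"
proof -
  obtain B where B: "B \<subseteq> W" "V.independent B" "W \<subseteq> V.span B" "card B = V.dim W"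
    by (rule V.basis_exists)
  have fB: "finite B" using B(1) assms(2) finite_subset by blast
  have "V.span W \<subseteq> V.span B" using B(3) by (metis V.span_mono V.span_span)
  then have "A \<subseteq> V.span B" using assms(1) by blast
  then show ?thesis using V.dim_le_card[OF _ fB] B(4) by simp
qed

lemma dim_Un_fin:
  fixes A B :: "'k::field ncpoly set"
  assumes "finite A" "finite B"
  shows "V.dim (A \<union> B) \<le> V.dim A + V.dim B"
proof -
  obtain BA where BA: "BA \<subseteq> A" "V.independent BA" "A \<subseteq> V.span BA" "card BA = V.dim A"
    by (rule V.basis_exists)
  obtain BB where BB: "BB \<subseteq> B" "V.independent BB" "B \<subseteq> V.span BB" "card BB = V.dim B"
    by (rule V.basis_exists)
  have f: "finite (BA \<union> BB)" using BA(1) BB(1) assms finite_subset by blast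
  have "A \<union> B \<subseteq> V.span (BA \<union> BB)"
    using BA(3) BB(3) V.span_mono[of BA "BA \<union> BB"] V.span_mono[of BB "BA \<union> BB"] by blast
  then have "V.dim (A \<union> B) \<le> card (BA \<union> BB)" using V.dim_le_card f by blast
  also have "\<dots> \<le> card BA + card BB" by (rule card_Un_le)
  finally show ?thesis using BA(4) BB(4) by simp
qed

lemma dim_image_fin:
  fixes A :: "'k::field ncpoly set"
  assumes "additive_hom f" "finite A"
  shows "V.dim (f ` A) \<le> V.dim A"
proof -
  obtain B where B: "B \<subseteq> A" "V.independent B" "A \<subseteq> V.span B" "card B = V.dim A"
    by (rule V.basis_exists)
  have fB: "finite B" using B(1) assms(2) finite_subset by blast
  have "f ` A \<subseteq> V.span (f ` B)" using B(3) lin_span_image_subset[OF assms(1), of B] by blast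
  then have "V.dim (f ` A) \<le> card (f ` B)" using V.dim_le_card fB by blast
  also have "\<dots> \<le> card B" using card_image_le fB by blast
  finally show ?thesis using B(4) by simp
qed

lemma dim_UN_fin:
  fixes A :: "'i \<Rightarrow> 'k::field ncpoly set"
  assumes "finite I" "\<And>i. i \<in> I \<Longrightarrow> finite (A i)"
  shows "V.dim (\<Union>i\<in>I. A i) \<le> (\<Sum>i\<in>I. V.dim (A i))"
  using assms
proof (induction I rule: finite_induct)
  case empty
  then show ?case using V.dim_le_card[of "{}" "{}"] by (simp del: V.dim_span)
next
  case (insert i I)
  have "V.dim (\<Union>j\<in>insert i I. A j) = V.dim (A i \<union> (\<Union>j\<in>I. A j))" by simp
  also have "\<dots> \<le> V.dim (A i) + V.dim (\<Union>j\<in>I. A j)"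
    by (rule dim_Un_fin) (use insert in auto)
  also have "\<dots> \<le> V.dim (A i) + (\<Sum>j\<in>I. V.dim (A j))" using insert by auto
  finally show ?case using insert by simp
qed

lemma dim_le_card_fin:
  fixes A :: "'k::field ncpoly set"
  assumes "finite A" shows "V.dim A \<le> card A"
  using V.dim_le_card[OF V.span_superset assms] .



declare plus_fun_apply[simp del] zero_fun_apply[simp del]
lemmas fa = fun_eq_iff plus_fun_apply zero_fun_apply sc_apply

definition mon :: "nat list \<Rightarrow> 'k::field ncpoly" where "mon u = (\<lambda>w. if w = u then 1 else 0)"
definition W :: "nat \<Rightarrow> nat \<Rightarrow> nat list set" where "W p n = {w. set w \<subseteq> {..<p} \<and> length w = n}"
definition prep :: "nat \<Rightarrow> 'k::field ncpoly \<Rightarrow> 'k ncpoly" where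
  "prep x f = (\<lambda>w. case w of [] \<Rightarrow> 0 | y # w' \<Rightarrow> if y = x then f w' else 0)"
definition rmul :: "'k::field ncpoly \<Rightarrow> 'k ncpoly \<Rightarrow> 'k ncpoly" where
  "rmul r g = (\<lambda>w. if 2 \<le> length w then r (take 2 w) * g (drop 2 w) else 0)"
definition hom :: "nat \<Rightarrow> 'k::field ncpoly \<Rightarrow> 'k ncpoly" where
  "hom n f = (\<lambda>w. if length w = n then f w else 0)"
definition shL :: "nat list \<Rightarrow> 'k::field ncpoly \<Rightarrow> 'k ncpoly" where
  "shL u f = (\<lambda>w. if take (length u) w = u then f (drop (length u) w) else 0)"
definition shR :: "nat list \<Rightarrow> 'k::field ncpoly \<Rightarrow> 'k ncpoly" where
  "shR v f = (\<lambda>w. if length v \<le> length w \<and> drop (length w - length v) w = v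
                   then f (take (length w - length v) w) else 0)"
definition supp :: "'k::field ncpoly \<Rightarrow> nat list set" where "supp f = {w. f w \<noteq> 0}"

lemma additive_hom_zero: "additive_hom f \<Longrightarrow> f 0 = 0"
proof -
  assume a: "additive_hom f"
  have "f (sc 0 0) = sc 0 (f 0)" using a unfolding additive_hom_def by blast
  then show "f 0 = 0" by simp
qed

lemma additive_hom_sum: "additive_hom f \<Longrightarrow> f (\<Sum>x\<in>A. g x) = (\<Sum>x\<in>A. f (g x))"
proof (induction A rule: infinite_finite_induct)
  case (infinite A) then show ?case using additive_hom_zero by (metis sum.infinite)
next
  case empty then show ?case using additive_hom_zero by (metis sum.empty)
next
  case (insert x F) then show ?case by (simp add: additive_hom_def)
qed

lemma additive_hom_sc: "additive_hom f \<Longrightarrow> f (sc c x) = sc c (f x)"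
  by (simp add: additive_hom_def)

lemma ah_prep: "additive_hom (prep x)"
  by (auto simp: additive_hom_def prep_def fa split: list.split)
lemma ah_rmul: "additive_hom (rmul r)"
  by (auto simp: additive_hom_def rmul_def fa algebra_simps)
lemma ah_hom: "additive_hom (hom n)"
  by (auto simp: additive_hom_def hom_def fa)
lemma ah_shL: "additive_hom (shL u)"
  by (auto simp: additive_hom_def shL_def fa)
lemma ah_shR: "additive_hom (shR u)"
  by (auto simp: additive_hom_def shR_def fa)

lemma shL_Nil: "shL [] f = f" by (simp add: shL_def)
lemma shL_Cons: "shL (x # u) f = prep x (shL u f)"
  by (auto simp: shL_def prep_def fun_eq_iff split: list.split)

lemma shR_prep: "shR v (prep x g) = prep x (shR v g)"
proof (rule ext)
  fix w :: "nat list"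
  show "shR v (prep x g) w = prep x (shR v g) w"
  proof (cases w)
    case Nil then show ?thesis by (auto simp: shR_def prep_def)
  next
    case (Cons y w')
    show ?thesis
    proof (cases "length v \<le> length w'")
      case True
      then have "Suc (length w') - length v = Suc (length w' - length v)" by simp
      then show ?thesis using True Cons by (auto simp: shR_def prep_def)
    next
      case False
      then show ?thesis using Cons by (auto simp: shR_def prep_def)
    qed
  qed
qed

lemma shR_app: "shR v f (x @ v) = f x"
  by (simp add: shR_def)

lemma shR_not: "\<not> (\<exists>x. w = x @ v) \<Longrightarrow> shR v f w = 0"
  unfolding shR_def by (metis append_take_drop_id)

lemma shR_rmul_mon: "shR v (rmul r (mon u)) = rmul r (mon (u @ v))"
proof (rule ext)
  fix w :: "nat list"
  show "shR v (rmul r (mon u)) w = rmul r (mon (u @ v)) w"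
  proof (cases "\<exists>x. w = x @ v")
    case True
    then obtain x where w: "w = x @ v" by blast
    show ?thesis
    proof (cases "2 \<le> length x")
      case True
      then show ?thesis by (simp add: w shR_app rmul_def mon_def)
    next
      case False
      have "2 \<le> length (x @ v) \<Longrightarrow> drop 2 (x @ v) \<noteq> u @ v"
      proof
        assume "2 \<le> length (x @ v)" "drop 2 (x @ v) = u @ v"
        then have "length (drop 2 (x @ v)) = length (u @ v)" by simp
        then show False using False \<open>2 \<le> length (x @ v)\<close> by simp
      qed
      then show ?thesis using False by (simp add: w shR_app rmul_def mon_def)
    qed
  next
    case False
    have "rmul r (mon (u @ v)) w = 0"
    proof (rule ccontr)
      assume "rmul r (mon (u @ v)) w \<noteq> 0"
      then have "drop 2 w = u @ v" by (auto simp: rmul_def mon_def split: if_splits)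
      then have "w = (take 2 w @ u) @ v" by (metis append_assoc append_take_drop_id)
      then show False using False by blast
    qed
    then show ?thesis using False shR_not by metis
  qed
qed



lemma take_prefix_iff:
  "take (length u) w = u \<longleftrightarrow> u \<in> (\<lambda>i. take i w) ` {0..length w}"
proof
  assume h: "take (length u) w = u"
  then have "length (take (length u) w) = length u" by simp
  then have "min (length u) (length w) = length u" by (simp only: length_take)
  then have "length u \<le> length w" by (metis min.absorb_iff1)
  then show "u \<in> (\<lambda>i. take i w) ` {0..length w}" using h by force
next
  assume "u \<in> (\<lambda>i. take i w) ` {0..length w}"
  then show "take (length u) w = u" by auto
qed

lemma nc_mult_left:
  assumes "finite (supp a)"
  shows "nc_mult a f = (\<Sum>u\<in>supp a. sc (a u) (shL u f))"
proof (rule ext)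
  fix w :: "nat list"
  let ?P = "(\<lambda>i. take i w) ` {0..length w}"
  have inj: "inj_on (\<lambda>i. take i w) {0..length w}"
    by (auto simp: inj_on_def) (metis length_take min.absorb2)
  have "nc_mult a f w = (\<Sum>i\<in>{0..length w}. a (take i w) * f (drop i w))"
    by (simp add: nc_mult_def)
  also have "\<dots> = (\<Sum>u\<in>?P. a u * f (drop (length u) w))"
    by (subst sum.reindex[OF inj]) (auto intro!: sum.cong simp: min_def)
  also have "\<dots> = (\<Sum>u\<in>supp a \<inter> ?P. a u * f (drop (length u) w))"
    by (rule sum.mono_neutral_right) (auto simp: supp_def)
  also have "\<dots> = (\<Sum>u\<in>supp a. if u \<in> ?P then a u * f (drop (length u) w) else 0)"
    by (rule sum.inter_restrict[OF assms])
  also have "\<dots> = (\<Sum>u\<in>supp a. sc (a u) (shL u f) w)"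
    by (rule sum.cong) (auto simp: shL_def sc_apply take_prefix_iff[symmetric])
  also have "\<dots> = (\<Sum>u\<in>supp a. sc (a u) (shL u f)) w"
    by (simp add: sum_fun_apply)
  finally show "nc_mult a f w = (\<Sum>u\<in>supp a. sc (a u) (shL u f)) w" .
qed

lemma drop_suffix_iff:
  "(length v \<le> length w \<and> drop (length w - length v) w = v) \<longleftrightarrow> v \<in> (\<lambda>i. drop i w) ` {0..length w}"
proof
  assume h: "length v \<le> length w \<and> drop (length w - length v) w = v"
  then show "v \<in> (\<lambda>i. drop i w) ` {0..length w}"
    by (intro image_eqI[of _ _ "length w - length v"]) auto
next
  assume "v \<in> (\<lambda>i. drop i w) ` {0..length w}"
  then show "length v \<le> length w \<and> drop (length w - length v) w = v" by auto
qed

lemma nc_mult_right: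
  assumes "finite (supp a)"
  shows "nc_mult f a = (\<Sum>v\<in>supp a. sc (a v) (shR v f))"
proof (rule ext)
  fix w :: "nat list"
  let ?P = "(\<lambda>i. drop i w) ` {0..length w}"
  have inj: "inj_on (\<lambda>i. drop i w) {0..length w}"
    by (auto simp: inj_on_def) (metis diff_diff_cancel length_drop)
  have "nc_mult f a w = (\<Sum>i\<in>{0..length w}. f (take i w) * a (drop i w))"
    by (simp add: nc_mult_def)
  also have "\<dots> = (\<Sum>v\<in>?P. a v * f (take (length w - length v) w))"
    by (subst sum.reindex[OF inj]) (auto intro!: sum.cong simp: mult.commute)
  also have "\<dots> = (\<Sum>v\<in>supp a \<inter> ?P. a v * f (take (length w - length v) w))"
    by (rule sum.mono_neutral_right) (auto simp: supp_def)
  also have "\<dots> = (\<Sum>v\<in>supp a. if v \<in> ?P then a v * f (take (length w - length v) w) else 0)"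
    by (rule sum.inter_restrict[OF assms])
  also have "\<dots> = (\<Sum>v\<in>supp a. sc (a v) (shR v f) w)"
    by (rule sum.cong) (auto simp: shR_def sc_apply drop_suffix_iff[symmetric])
  also have "\<dots> = (\<Sum>v\<in>supp a. sc (a v) (shR v f)) w"
    by (simp add: sum_fun_apply)
  finally show "nc_mult f a w = (\<Sum>v\<in>supp a. sc (a v) (shR v f)) w" .
qed

lemma hom_shL: "hom n (shL u f) = (if length u \<le> n then shL u (hom (n - length u) f) else 0)"
proof (cases "length u \<le> n")
  case True
  then show ?thesis
    by (auto simp: fun_eq_iff hom_def shL_def)
next
  case False
  then show ?thesis
    by (auto simp: fun_eq_iff hom_def shL_def zero_fun_apply)
qed

lemma hom_shR: "hom n (shR v f) = (if length v \<le> n then shR v (hom (n - length v) f) else 0)"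
  by (auto simp: fun_eq_iff hom_def shR_def zero_fun_apply)



fun G :: "nat \<Rightarrow> nat \<Rightarrow> ('k::field) ncpoly set" where
  "G p 0 = {}"
| "G p (Suc 0) = {}"
| "G p (Suc (Suc n)) = (\<Union>x\<in>{..<p}. prep x ` G p (Suc n)) \<union>
     (\<lambda>(r, v). rmul r (mon v)) ` (R2_rels p \<times> W p n)"

definition sup_in :: "nat \<Rightarrow> nat \<Rightarrow> 'k::field ncpoly \<Rightarrow> bool" where
  "sup_in p n f \<longleftrightarrow> (\<forall>w. f w \<noteq> 0 \<longrightarrow> w \<in> W p n)"

lemma finite_W: "finite (W p n)"
  unfolding W_def by (rule finite_lists_length_eq) simp
lemma card_W: "card (W p n) = p ^ n"
  unfolding W_def using card_lists_length_eq[of "{..<p}" n] by simp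

lemma nc_var_mon: "nc_var i = mon [i]"
  by (simp add: nc_var_def mon_def)

lemma supp_mon: "supp (mon u :: 'k::field ncpoly) = {u}"
  by (auto simp: supp_def mon_def)

lemma nc_mult_var_var: "nc_mult (nc_var i) (nc_var j) = (mon [i, j] :: 'k::field ncpoly)"
proof -
  have "nc_mult (nc_var i) (nc_var j) = (\<Sum>u\<in>{[i]}. sc (mon [i] u) (shL u (mon [j] :: 'k ncpoly)))"
    using nc_mult_left[of "mon [i] :: 'k ncpoly" "mon [j]"] by (simp add: supp_mon nc_var_mon)
  also have "\<dots> = mon [i, j]"
    by (auto simp: fun_eq_iff sc_apply shL_def mon_def take_Suc_conv_app_nth)
       (metis Cons_eq_append_conv append_take_drop_id take_eq_Nil)+
  finally show ?thesis .
qed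

lemma R2_rels_eq: "R2_rels p =
   (\<lambda>i. (mon [i, i] :: 'k::field ncpoly)) ` {..<p} \<union>
   (\<lambda>j. (\<lambda>w. \<Sum>i<p. mon [i, (i + j) mod p] w)) ` {1..p - 1}"
  unfolding R2_rels_def nc_mult_var_var by auto

lemma finite_R2: "finite (R2_rels p)"
  unfolding R2_rels_eq by auto

lemma card_R2: "card (R2_rels p :: 'k::field ncpoly set) \<le> 2 * p"
proof -
  have "card (R2_rels p :: 'k ncpoly set) \<le> card ((\<lambda>i. (mon [i, i] :: 'k::field ncpoly)) ` {..<p})
     + card ((\<lambda>j. (\<lambda>w. \<Sum>i<p. (mon [i, (i + j) mod p] w :: 'k))) ` {1..p - 1})"
    unfolding R2_rels_eq by (rule card_Un_le)
  also have "\<dots> \<le> card {..<p} + card {1..p-1}"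
    by (intro add_mono card_image_le) auto
  finally show ?thesis by simp
qed

lemma R2_sup:
  fixes r :: "'k::field ncpoly"
  assumes "r \<in> R2_rels p" "p > 0"
  shows "sup_in p 2 r"
  using assms(1) unfolding R2_rels_eq sup_in_def
proof (elim UnE imageE; intro allI impI)
  fix w i assume "r = mon [i, i]" "i \<in> {..<p}" "r w \<noteq> 0"
  then show "w \<in> W p 2" by (auto simp: mon_def W_def split: if_splits)
next
  fix w j assume r: "r = (\<lambda>w. \<Sum>i<p. mon [i, (i + j) mod p] w)" "r w \<noteq> 0"
  then obtain i where "i < p" "mon [i, (i + j) mod p] w \<noteq> (0::'k)"
    by (metis (mono_tags, lifting) lessThan_iff sum.neutral)
  then show "w \<in> W p 2" using assms(2) by (auto simp: mon_def W_def split: if_splits)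
qed

lemma finite_G: "finite (G p n)"
  by (induction p n rule: G.induct) (auto intro!: finite_W finite_R2)

lemma prep_G: "x < p \<Longrightarrow> prep x ` G p n \<subseteq> G p (Suc n)"
  by (cases n) auto

lemma G_sup: "p > 0 \<Longrightarrow> g \<in> G p n \<Longrightarrow> sup_in p n g"
proof (induction p n arbitrary: g rule: G.induct)
  case (1 p) then show ?case by simp
next
  case (2 p) then show ?case by simp
next
  case (3 p n)
  from "3.prems"(2) consider (a) x h where "x < p" "h \<in> G p (Suc n)" "g = prep x h"
    | (b) r v where "r \<in> R2_rels p" "v \<in> W p n" "g = rmul r (mon v)"
    by auto
  then show ?case
  proof cases
    case a
    have "sup_in p (Suc n) h" using "3.IH"(1) "3.prems"(1) a by blast
    then show ?thesis using a
      by (auto simp: sup_in_def prep_def W_def split: list.splits if_splits)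
  next
    case b
    have rs: "sup_in p 2 r" using R2_sup b "3.prems"(1) by blast
    show ?thesis unfolding sup_in_def
    proof (intro allI impI)
      fix w assume "g w \<noteq> 0"
      then have w: "2 \<le> length w" "r (take 2 w) \<noteq> 0" "drop 2 w = v"
        using b by (auto simp: rmul_def mon_def split: if_splits)
      have "take 2 w \<in> W p 2" using rs w(2) by (simp add: sup_in_def)
      moreover have "w = take 2 w @ drop 2 w" by simp
      ultimately show "w \<in> W p (Suc (Suc n))" using w(3) b(2)
        by (auto simp: W_def) (metis Un_iff append_take_drop_id set_append subset_iff lessThan_iff)
    qed
  qed
qed

lemma sup_span:
  assumes "sup_in p n f"
  shows "f \<in> V.span (mon ` W p n)"
proof -
  have "f = (\<Sum>w\<in>W p n. sc (f w) (mon w))"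
  proof (rule ext)
    fix x
    have "(\<Sum>w\<in>W p n. sc (f w) (mon w)) x = (\<Sum>w\<in>W p n. if x = w then f w else 0)"
      by (auto simp: sum_fun_apply sc_apply mon_def intro!: sum.cong)
    also have "\<dots> = f x" using assms finite_W[of p n]
      by (auto simp: sum.delta sup_in_def)
    finally show "f x = (\<Sum>w\<in>W p n. sc (f w) (mon w)) x" by simp
  qed
  also have "\<dots> \<in> V.span (mon ` W p n)"
    by (intro V.span_sum V.span_scale V.span_base) auto
  finally show ?thesis .
qed

lemma inj_mon: "inj (mon :: nat list \<Rightarrow> 'k::field ncpoly)"
  by (auto simp: inj_def mon_def fun_eq_iff)

lemma card_monW: "card ((mon :: nat list \<Rightarrow> 'k::field ncpoly) ` W p n) = p ^ n"
  using card_image[OF inj_on_subset[OF inj_mon]] card_W by (metis subset_UNIV)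

lemma indep_monW: "V.independent ((mon :: nat list \<Rightarrow> 'k::field ncpoly) ` W p n)"
proof (rule V.independent_if_scalars_zero)
  show "finite ((mon :: nat list \<Rightarrow> 'k::field ncpoly) ` W p n)" using finite_W by blast
next
  fix c :: "'k ncpoly \<Rightarrow> 'k" and x :: "'k ncpoly"
  assume s: "(\<Sum>x\<in>mon ` W p n. sc (c x) x) = 0" and x: "x \<in> mon ` W p n"
  then obtain w0 where w0: "w0 \<in> W p n" "x = mon w0" by blast
  have "0 = (\<Sum>m\<in>(mon ` W p n :: 'k ncpoly set). sc (c m) m) w0" using s by (simp add: zero_fun_apply)
  also have "\<dots> = (\<Sum>m\<in>(mon ` W p n :: 'k ncpoly set). c m * m w0)" by (simp add: sum_fun_apply sc_apply)
  also have "\<dots> = (\<Sum>m\<in>(mon ` W p n :: 'k ncpoly set). if m = x then c m else 0)"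
  proof (rule sum.cong)
    fix m :: "'k ncpoly" assume "m \<in> mon ` W p n"
    then obtain u where "m = mon u" by blast
    show "c m * m w0 = (if m = x then c m else 0)"
    proof (cases "u = w0")
      case True then show ?thesis using w0 \<open>m = mon u\<close> by (simp add: mon_def)
    next
      case False
      have "m u = 1" "x u = 0" using False w0 \<open>m = mon u\<close> by (simp_all add: mon_def)
      then have "m \<noteq> x" by auto
      then show ?thesis using False \<open>m = mon u\<close> by (simp add: mon_def)
    qed
  qed simp
  also have "\<dots> = c x" using x finite_W[of p n] by (simp add: sum.delta)
  finally show "c x = 0" by simp
qed



lemma shL_G: "set u \<subseteq> {..<p} \<Longrightarrow> shL u ` (G p m :: 'k::field ncpoly set) \<subseteq> G p (m + length u)"
proof (induction u)
  case Nil then show ?case by (simp add: shL_Nil)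
next
  case (Cons x u)
  have "shL (x # u) ` (G p m :: 'k ncpoly set) = prep x ` (shL u ` G p m)" by (auto simp: shL_Cons)
  also have "\<dots> \<subseteq> prep x ` G p (m + length u)" using Cons by (intro image_mono) simp
  also have "\<dots> \<subseteq> G p (Suc (m + length u))" using Cons.prems by (intro prep_G) auto
  finally show ?case by simp
qed

lemma shR_G: "set v \<subseteq> {..<p} \<Longrightarrow> shR v ` (G p m :: 'k::field ncpoly set) \<subseteq> G p (m + length v)"
proof (induction p m rule: G.induct)
  case (1 p) then show ?case by simp
next
  case (2 p) then show ?case by simp
next
  case (3 p n)
  show ?case
  proof
    fix g :: "'k ncpoly" assume "g \<in> shR v ` G p (Suc (Suc n))"
    then obtain h where h: "h \<in> G p (Suc (Suc n))" "g = shR v h" by blast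
    from h(1) consider (a) x h' where "x < p" "h' \<in> G p (Suc n)" "h = prep x h'"
      | (b) r u where "r \<in> R2_rels p" "u \<in> W p n" "h = rmul r (mon u)"
      by auto
    then show "g \<in> G p (Suc (Suc n) + length v)"
    proof cases
      case a
      have "shR v h' \<in> G p (Suc n + length v)" using "3.IH"(1) "3.prems" a by blast
      then have "prep x (shR v h') \<in> G p (Suc (Suc n + length v))"
        using prep_G[OF a(1)] by blast
      then show ?thesis using a h by (simp add: shR_prep)
    next
      case b
      have "u @ v \<in> W p (n + length v)" using b(2) "3.prems" by (auto simp: W_def)
      then have "rmul r (mon (u @ v)) \<in> G p (Suc (Suc (n + length v)))" using b(1) by force
      then show ?thesis using b h by (simp add: shR_rmul_mon)
    qed
  qed
qed

lemma span_G_shL: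
  fixes f :: "'k::field ncpoly"
  assumes "set u \<subseteq> {..<p}" "f \<in> V.span (G p m)"
  shows "shL u f \<in> V.span (G p (m + length u))"
proof -
  have "shL u f \<in> V.span (shL u ` G p m)" by (rule lin_span_image[OF ah_shL assms(2)])
  moreover have "V.span (shL u ` G p m) \<subseteq> V.span (G p (m + length u))"
    by (rule V.span_mono[OF shL_G[OF assms(1)]])
  ultimately show ?thesis by blast
qed

lemma span_G_shR:
  fixes f :: "'k::field ncpoly"
  assumes "set v \<subseteq> {..<p}" "f \<in> V.span (G p m)"
  shows "shR v f \<in> V.span (G p (m + length v))"
proof -
  have "shR v f \<in> V.span (shR v ` G p m)" by (rule lin_span_image[OF ah_shR assms(2)])
  moreover have "V.span (shR v ` G p m) \<subseteq> V.span (G p (m + length v))"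
    by (rule V.span_mono[OF shR_G[OF assms(1)]])
  ultimately show ?thesis by blast
qed

definition okp :: "nat \<Rightarrow> 'k::field ncpoly \<Rightarrow> bool" where
  "okp p f \<longleftrightarrow> (\<forall>n. hom n f \<in> V.span (G p n))"

lemma ncpoly_set_D:
  assumes "a \<in> ncpoly_set p"
  shows "finite (supp a)" "u \<in> supp a \<Longrightarrow> set u \<subseteq> {..<p}"
  using assms by (auto simp: ncpoly_set_def supp_def)

lemma ok_lmult:
  assumes "a \<in> ncpoly_set p" "okp p f"
  shows "okp p (nc_mult a f)"
  unfolding okp_def
proof
  fix n
  have "hom n (nc_mult a f) = (\<Sum>u\<in>supp a. sc (a u) (hom n (shL u f)))"
    unfolding nc_mult_left[OF ncpoly_set_D(1)[OF assms(1)]]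
    by (simp add: additive_hom_sum[OF ah_hom] additive_hom_sc[OF ah_hom])
  also have "\<dots> \<in> V.span (G p n)"
  proof (intro V.span_sum V.span_scale)
    fix u assume u: "u \<in> supp a"
    show "hom n (shL u f) \<in> V.span (G p n)"
    proof (cases "length u \<le> n")
      case True
      have "shL u (hom (n - length u) f) \<in> V.span (G p (n - length u + length u))"
        using span_G_shL[OF ncpoly_set_D(2)[OF assms(1) u]] assms(2) by (auto simp: okp_def)
      then show ?thesis using True by (simp add: hom_shL)
    next
      case False then show ?thesis by (simp add: hom_shL V.span_zero)
    qed
  qed
  finally show "hom n (nc_mult a f) \<in> V.span (G p n)" .
qed

lemma ok_rmult:
  assumes "a \<in> ncpoly_set p" "okp p f"
  shows "okp p (nc_mult f a)"
  unfolding okp_def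
proof
  fix n
  have "hom n (nc_mult f a) = (\<Sum>u\<in>supp a. sc (a u) (hom n (shR u f)))"
    unfolding nc_mult_right[OF ncpoly_set_D(1)[OF assms(1)]]
    by (simp add: additive_hom_sum[OF ah_hom] additive_hom_sc[OF ah_hom])
  also have "\<dots> \<in> V.span (G p n)"
  proof (intro V.span_sum V.span_scale)
    fix u assume u: "u \<in> supp a"
    show "hom n (shR u f) \<in> V.span (G p n)"
    proof (cases "length u \<le> n")
      case True
      have "shR u (hom (n - length u) f) \<in> V.span (G p (n - length u + length u))"
        using span_G_shR[OF ncpoly_set_D(2)[OF assms(1) u]] assms(2) by (auto simp: okp_def)
      then show ?thesis using True by (simp add: hom_shR)
    next
      case False then show ?thesis by (simp add: hom_shR V.span_zero)
    qed
  qed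
  finally show "hom n (nc_mult f a) \<in> V.span (G p n)" .
qed

lemma ok_gen:
  assumes "r \<in> R2_rels p" "p > 0"
  shows "okp p r"
  unfolding okp_def
proof
  fix n
  have sr: "sup_in p 2 r" using R2_sup assms by blast
  show "hom n r \<in> V.span (G p n)"
  proof (cases "n = 2")
    case True
    have "r = rmul r (mon [])"
    proof (rule ext)
      fix w
      show "r w = rmul r (mon []) w"
      proof (cases "length w = 2")
        case True then show ?thesis by (simp add: rmul_def mon_def)
      next
        case False
        then have "r w = 0" using sr by (auto simp: sup_in_def W_def)
        moreover have "rmul r (mon []) w = 0" using False by (auto simp: rmul_def mon_def)
        ultimately show ?thesis by simp
      qed
    qed
    moreover have "rmul r (mon []) \<in> G p 2" using assms(1) by (force simp: numeral_2_eq_2 W_def)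
    moreover have "hom n r = r" using True sr by (auto simp: hom_def fun_eq_iff sup_in_def W_def)
    ultimately show ?thesis using True V.span_base by metis
  next
    case False
    have "hom n r = 0" using False sr by (auto simp: hom_def fun_eq_iff sup_in_def W_def zero_fun_apply)
    then show ?thesis using V.span_zero by metis
  qed
qed

lemma ideal_ok:
  assumes "f \<in> nc_ideal p (R2_rels p)" "p > 0"
  shows "okp p f"
  using assms(1)
proof (induction rule: nc_ideal.induct)
  case (gen r) then show ?case using ok_gen assms(2) by blast
next
  case zero
  have "hom n (nc_zero :: 'a ncpoly) = 0" for n
    by (simp add: hom_def nc_zero_def fun_eq_iff zero_fun_apply)
  then show ?case unfolding okp_def using V.span_zero by metis
next
  case (add f g)
  have "nc_add f g = f + g" by (simp add: nc_add_def fun_eq_iff plus_fun_apply)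
  have "hom n (nc_add f g) = hom n f + hom n g" for n
    using ah_hom \<open>nc_add f g = f + g\<close> unfolding additive_hom_def by metis
  then show ?case using add unfolding okp_def using V.span_add by metis
next
  case (smult f c)
  have "nc_smult c f = sc c f" by (simp add: nc_smult_def fun_eq_iff sc_apply)
  have "hom n (nc_smult c f) = sc c (hom n f)" for n
    using additive_hom_sc[OF ah_hom] \<open>nc_smult c f = sc c f\<close> by metis
  then show ?case using smult unfolding okp_def using V.span_scale by metis
next
  case (lmult f a) then show ?case using ok_lmult by blast
next
  case (rmult f a) then show ?case using ok_rmult by blast
qed



lemma G_span_mon: "p > 0 \<Longrightarrow> (G p n :: 'k::field ncpoly set) \<subseteq> V.span (mon ` W p n)"
  using G_sup sup_span by blast

lemma d_le: "p > 0 \<Longrightarrow> V.dim (G p n :: 'k::field ncpoly set) \<le> p ^ n"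
proof -
  assume p: "p > 0"
  have "V.dim (G p n :: 'k ncpoly set) \<le> card (mon ` W p n :: 'k ncpoly set)"
    by (rule V.dim_le_card[OF G_span_mon[OF p]]) (rule finite_imageI[OF finite_W])
  then show ?thesis using card_monW by metis
qed

lemma complement:
  assumes "p > 0"
  obtains C :: "'k::field ncpoly set" where "finite C" "card C \<le> p ^ n - V.dim (G p n :: 'k ncpoly set)"
    "mon ` W p n \<subseteq> V.span (C \<union> G p n)"
proof -
  let ?M = "(mon ` W p n :: 'k ncpoly set)"
  obtain B :: "'k ncpoly set" where B: "B \<subseteq> G p n" "V.independent B" "G p n \<subseteq> V.span B" "card B = V.dim (G p n :: 'k ncpoly set)"
    by (rule V.basis_exists)
  obtain B' where B': "B \<subseteq> B'" "B' \<subseteq> B \<union> ?M" "V.independent B'" "B \<union> ?M \<subseteq> V.span B'"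
    using V.maximal_independent_subset_extend[of B "B \<union> ?M"] B(2) by blast
  have "B \<subseteq> V.span ?M" using B(1) G_span_mon[OF assms, of n] by blast
  then have "B' \<subseteq> V.span ?M" using B'(2) V.span_superset by blast
  then have fc: "finite B' \<and> card B' \<le> card ?M"
    using V.independent_span_bound[OF finite_imageI[OF finite_W] B'(3)] by blast
  have fB: "finite B" using B'(1) fc finite_subset by blast
  let ?C = "B' - B"
  have "finite ?C" using fc by blast
  moreover have "card ?C \<le> p ^ n - V.dim (G p n :: 'k ncpoly set)"
    using card_Diff_subset[OF fB B'(1)] fc card_monW[where 'k='k, of p n] B(4) by (metis diff_le_mono)
  moreover have "?M \<subseteq> V.span (?C \<union> G p n)"
  proof -
    have "B' \<subseteq> ?C \<union> G p n" using B(1) by blast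
    then have "V.span B' \<subseteq> V.span (?C \<union> G p n)" by (rule V.span_mono)
    then show ?thesis using B'(4) by blast
  qed
  ultimately show ?thesis using that by blast
qed

lemma prep_prep_Cons: "prep a (prep b g) (a' # b' # w') = (if a' = a \<and> b' = b then g w' else 0)"
  by (simp add: prep_def)
lemma prep_prep_single: "prep a (prep b g) [a'] = 0"
  by (simp add: prep_def)
lemma prep_Nil: "prep a g [] = 0"
  by (simp add: prep_def)

lemma rmul_expand:
  fixes r g :: "'k::field ncpoly"
  assumes "sup_in p 2 r"
  shows "rmul r g = (\<Sum>a<p. \<Sum>b<p. sc (r [a, b]) (prep a (prep b g)))"
proof (rule ext)
  fix w :: "nat list"
  have "(\<Sum>a<p. \<Sum>b<p. sc (r [a, b]) (prep a (prep b g))) w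
      = (\<Sum>a<p. \<Sum>b<p. r [a, b] * prep a (prep b g) w)"
    by (simp add: sum_fun_apply sc_apply)
  also have "\<dots> = rmul r g w"
  proof (cases w)
    case Nil then show ?thesis by (simp add: prep_Nil rmul_def)
  next
    case (Cons a' w1)
    show ?thesis
    proof (cases w1)
      case Nil then show ?thesis using Cons by (simp add: prep_prep_single rmul_def)
    next
      case (Cons b' w')
      have t: "\<And>a b. r [a, b] * prep a (prep b g) w = (if a = a' then (if b = b' then r [a', b'] * g w' else 0) else 0)"
        using Cons \<open>w = a' # w1\<close> by (simp add: prep_prep_Cons)
      have "(\<Sum>a<p. \<Sum>b<p. r [a, b] * prep a (prep b g) w)
          = (\<Sum>a<p. \<Sum>b<p. (if a = a' then (if b = b' then r [a', b'] * g w' else 0) else 0))"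
        by (simp only: t)
      also have "\<dots> = (\<Sum>a<p. if a = a' then (\<Sum>b<p. if b = b' then r [a', b'] * g w' else 0) else 0)"
        by (rule sum.cong) auto
      also have "\<dots> = (if a' < p \<and> b' < p then r [a', b'] * g w' else 0)"
        by (simp add: sum.delta)
      also have "\<dots> = r [a', b'] * g w'"
        using assms by (auto simp: sup_in_def W_def)
      finally show ?thesis using Cons \<open>w = a' # w1\<close> by (simp add: rmul_def)
    qed
  qed
  finally show "rmul r g w = (\<Sum>a<p. \<Sum>b<p. sc (r [a, b]) (prep a (prep b g))) w" by simp
qed

lemma recursion:
  assumes "p > 0"
  shows "int (V.dim (G p (Suc (Suc n)) :: 'k::field ncpoly set))
     \<le> int p * int (V.dim (G p (Suc n) :: 'k ncpoly set))
       + 2 * int p * (int (p ^ n) - int (V.dim (G p n :: 'k ncpoly set)))"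
proof -
  obtain C :: "'k ncpoly set" where C: "finite C" "card C \<le> p ^ n - V.dim (G p n :: 'k ncpoly set)"
    "mon ` W p n \<subseteq> V.span (C \<union> G p n)"
    using complement[OF assms] by blast
  define P where "P = (\<Union>x\<in>{..<p}. prep x ` (G p (Suc n) :: 'k ncpoly set))"
  define Q where "Q = (\<lambda>(r, c). rmul r c) ` (R2_rels p \<times> C)"
  have fP: "finite P" unfolding P_def using finite_G by blast
  have fQ: "finite Q" unfolding Q_def using finite_R2 C(1) by blast
  have "(G p (Suc (Suc n)) :: 'k ncpoly set) \<subseteq> V.span (P \<union> Q)"
  proof
    fix g :: "'k ncpoly" assume "g \<in> G p (Suc (Suc n))"
    then consider (a) "g \<in> P" | (b) r v where "r \<in> R2_rels p" "v \<in> W p n" "g = rmul r (mon v)"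
      unfolding P_def by auto
    then show "g \<in> V.span (P \<union> Q)"
    proof cases
      case a then show ?thesis using V.span_base by blast
    next
      case b
      have "rmul r ` (C \<union> G p n) \<subseteq> V.span (P \<union> Q)"
      proof
        fix h assume "h \<in> rmul r ` (C \<union> G p n)"
        then obtain c where c: "c \<in> C \<union> G p n" "h = rmul r c" by blast
        show "h \<in> V.span (P \<union> Q)"
        proof (cases "c \<in> C")
          case True
          then have "h \<in> Q" using c b(1) unfolding Q_def by force
          then show ?thesis using V.span_base by blast
        next
          case False
          then have cG: "c \<in> G p n" using c by blast
          have "h = (\<Sum>a<p. \<Sum>b<p. sc (r [a, b]) (prep a (prep b c)))"
            using c rmul_expand R2_sup[OF b(1) assms] by blast
          also have "\<dots> \<in> V.span (P \<union> Q)"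
          proof (intro V.span_sum V.span_scale V.span_base)
            fix a b assume "a \<in> {..<p}" "b \<in> {..<p}"
            then have "prep b c \<in> G p (Suc n)" using prep_G cG by blast
            then show "prep a (prep b c) \<in> P \<union> Q" unfolding P_def using \<open>a \<in> {..<p}\<close> by blast
          qed
          finally show ?thesis .
        qed
      qed
      then have "V.span (rmul r ` (C \<union> G p n)) \<subseteq> V.span (P \<union> Q)"
        by (metis V.span_mono V.span_span)
      moreover have "g \<in> V.span (rmul r ` (C \<union> G p n))"
        using b(2,3) C(3) lin_span_image[OF ah_rmul] by blast
      ultimately show ?thesis by blast
    qed
  qed
  then have d1: "V.dim (G p (Suc (Suc n)) :: 'k ncpoly set) \<le> V.dim (P \<union> Q)"
    by (rule dim_mono_fin) (simp add: fP fQ)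
  have d2: "V.dim (P \<union> Q) \<le> V.dim P + V.dim Q" by (rule dim_Un_fin[OF fP fQ])
  have d3: "V.dim P \<le> (\<Sum>x\<in>{..<p}. V.dim (prep x ` (G p (Suc n) :: 'k ncpoly set)))"
    unfolding P_def by (rule dim_UN_fin) (auto intro: finite_G)
  have d4: "(\<Sum>x\<in>{..<p}. V.dim (prep x ` (G p (Suc n) :: 'k ncpoly set)))
     \<le> (\<Sum>x\<in>{..<p}. V.dim (G p (Suc n) :: 'k ncpoly set))"
    by (intro sum_mono dim_image_fin ah_prep finite_G)
  have d5: "V.dim Q \<le> card Q" by (rule dim_le_card_fin[OF fQ])
  have d6: "card Q \<le> card ((R2_rels p :: 'k ncpoly set) \<times> C)" unfolding Q_def by (intro card_image_le finite_cartesian_product finite_R2 C(1))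
  have d7: "card ((R2_rels p :: 'k ncpoly set) \<times> C) = card (R2_rels p :: 'k ncpoly set) * card C" by (rule card_cartesian_product)
  have d8: "card (R2_rels p :: 'k ncpoly set) * card C \<le> 2 * p * (p ^ n - V.dim (G p n :: 'k ncpoly set))"
    by (intro mult_mono card_R2 C(2)) auto
  have d9: "(\<Sum>x\<in>{..<p}. V.dim (G p (Suc n) :: 'k ncpoly set)) = p * V.dim (G p (Suc n) :: 'k ncpoly set)"
    by simp
  have *: "V.dim (G p (Suc (Suc n)) :: 'k ncpoly set) \<le> p * V.dim (G p (Suc n) :: 'k ncpoly set)
      + 2 * p * (p ^ n - V.dim (G p n :: 'k ncpoly set))"
    using d1 d2 d3 d4 d5 d6 d7 d8 d9 by linarith
  have "V.dim (G p n :: 'k ncpoly set) \<le> p ^ n" using d_le assms by blast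
  then have e: "int (p ^ n - V.dim (G p n :: 'k ncpoly set)) = int (p ^ n) - int (V.dim (G p n :: 'k ncpoly set))"
    by simp
  have "int (V.dim (G p (Suc (Suc n)) :: 'k ncpoly set)) \<le> int (p * V.dim (G p (Suc n) :: 'k ncpoly set)
      + 2 * p * (p ^ n - V.dim (G p n :: 'k ncpoly set)))"
    using * by (simp only: of_nat_le_iff)
  also have "\<dots> = int p * int (V.dim (G p (Suc n) :: 'k ncpoly set))
       + 2 * int p * int (p ^ n - V.dim (G p n :: 'k ncpoly set))"
    by simp
  finally show ?thesis unfolding e .
qed



definition ee :: "nat \<Rightarrow> nat \<Rightarrow> 'k::field itself \<Rightarrow> int" where
  "ee p n (_ :: 'k itself) = int (p ^ n) - int (V.dim (G p n :: 'k ncpoly set))"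

lemma dim_empty_V: "V.dim ({} :: 'k::field ncpoly set) = 0"
  using V.dim_le_card[of "{} :: 'k ncpoly set" "{}"] by (simp del: V.dim_span)

lemma ee_pos:
  assumes "p \<ge> 9"
  shows "3 * ee p n TYPE('k::field) \<le> ee p (Suc n) TYPE('k) \<and> 0 < ee p n TYPE('k)"
proof (induction n rule: nat_less_induct)
  case (1 n)
  show ?case
  proof (cases n)
    case 0
    then show ?thesis using assms by (simp add: ee_def dim_empty_V)
  next
    case (Suc m)
    have IH: "3 * ee p m TYPE('k) \<le> ee p n TYPE('k)" "0 < ee p m TYPE('k)"
      using "1" Suc by auto
    have rec: "ee p (Suc n) TYPE('k) \<ge> int p * ee p n TYPE('k) - 2 * int p * ee p m TYPE('k)"
      using recursion[of p m, where 'k='k] assms Suc by (simp add: ee_def algebra_simps)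
    have pos: "0 < ee p n TYPE('k)" using IH by linarith
    have "2 * int p * (3 * ee p m TYPE('k)) \<le> 2 * int p * ee p n TYPE('k)"
      using IH(1) by (intro mult_left_mono) auto
    then have "3 * ee p (Suc n) TYPE('k) \<ge> int p * ee p n TYPE('k)"
      using rec by (simp add: algebra_simps)
    moreover have "int p * ee p n TYPE('k) \<ge> 9 * ee p n TYPE('k)"
      using assms pos by (intro mult_right_mono) auto
    ultimately show ?thesis using pos by linarith
  qed
qed

lemma exists_outside:
  assumes "p \<ge> 9"
  shows "\<exists>w\<in>W p n. (mon w :: 'k::field ncpoly) \<notin> V.span (G p n)"
proof (rule ccontr)
  assume "\<not> ?thesis"
  then have sub: "(mon ` W p n :: 'k ncpoly set) \<subseteq> V.span (G p n)" by blast
  have "p ^ n = V.dim (mon ` W p n :: 'k ncpoly set)"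
    using V.dim_eq_card_independent[OF indep_monW] card_monW by metis
  also have "\<dots> \<le> V.dim (G p n :: 'k ncpoly set)" by (rule dim_mono_fin[OF sub finite_G])
  finally have "int (p ^ n) \<le> int (V.dim (G p n :: 'k ncpoly set))" by simp
  moreover have "0 < ee p n TYPE('k)" using ee_pos[OF assms] by blast
  ultimately show False by (simp add: ee_def)
qed

theorem proposition3p31:
  fixes p :: nat
  assumes "prime p" and "odd p" and "p > 7"
  shows "\<not> quotient_fin_dim p (R2_rels p :: ('k::field) ncpoly set)"
proof
  assume "quotient_fin_dim p (R2_rels p :: 'k ncpoly set)"
  then obtain S :: "'k ncpoly set" where S: "finite S" "S \<subseteq> ncpoly_set p"
    "\<forall>f\<in>ncpoly_set p. \<exists>c :: 'k ncpoly \<Rightarrow> 'k.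
        (\<lambda>w. f w - (\<Sum>s\<in>S. c s * s w)) \<in> nc_ideal p (R2_rels p)"
    unfolding quotient_fin_dim_def by blast
  have p9: "p \<ge> 9" using assms(2,3) by presburger
  have p0: "p > 0" using assms(3) by simp
  define L where "L = (\<Union>s\<in>S. supp s)"
  have fL: "finite L" unfolding L_def using S(1,2) ncpoly_set_D(1) by blast
  define N where "N = Suc (Max (insert 0 (length ` L)))"
  have Nbig: "s x = 0" if "s \<in> S" "length x = N" for s x
  proof (rule ccontr)
    assume "s x \<noteq> 0"
    then have "x \<in> L" unfolding L_def supp_def using that(1) by blast
    then have "length x \<le> Max (insert 0 (length ` L))" using fL by (intro Max_ge) auto
    then show False using that(2) unfolding N_def by simp
  qed
  obtain w where w: "w \<in> W p N" "(mon w :: 'k ncpoly) \<notin> V.span (G p N)"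
    using exists_outside[OF p9] by blast
  have "(mon w :: 'k ncpoly) \<in> ncpoly_set p"
    using w(1) by (auto simp: ncpoly_set_def mon_def W_def)
  then obtain c :: "'k ncpoly \<Rightarrow> 'k" where
    c: "(\<lambda>x. mon w x - (\<Sum>s\<in>S. c s * s x)) \<in> nc_ideal p (R2_rels p)"
    using S(3) by blast
  have "hom N (\<lambda>x. mon w x - (\<Sum>s\<in>S. c s * s x)) \<in> V.span (G p N)"
    using ideal_ok[OF c p0] unfolding okp_def by blast
  moreover have "hom N (\<lambda>x. mon w x - (\<Sum>s\<in>S. c s * s x)) = (mon w :: 'k ncpoly)"
  proof (rule ext)
    fix x :: "nat list"
    show "hom N (\<lambda>x. mon w x - (\<Sum>s\<in>S. c s * s x)) x = mon w x"
    proof (cases "length x = N")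
      case True
      have "(\<Sum>s\<in>S. c s * s x) = 0" using Nbig True by (intro sum.neutral) simp
      then show ?thesis using True by (simp add: hom_def)
    next
      case False
      then show ?thesis using w(1) by (auto simp: hom_def mon_def W_def)
    qed
  qed
  ultimately show False using w(2) by simp
qed


end
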